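(* Let $n\ge2$ and $\omega\in\{0,1\}^n$ with $\omega_1=0$ and $\omega_n=1$. For $0\le k\le n$ let $S_k=\sum_{i=1}^k(1-2\omega_i)$ (so $S_0=0$). Then the stabilization time $T(\omega)$ of $\omega$ satisfies $$T(\omega)=\frac n2+\max_{1\le k\le n}S_k-\frac{S_n}{2}-1.$$
   Context: One step of the evolution on $\{0,1\}^n$ replaces simultaneously every occurrence of the consecutive substring "01" by "10" (for every $i$ with $\omega_i=0,\omega_{i+1}=1$ these two bits are swapped). Iterating, one reaches a string of the form $1\cdots10\cdots0$, called stabilized. The stabilization time $T(\omega)$ is the number of steps needed to reach a stabilized string from $\omega$ ($0$ if $\omega$ is already stabilized). *)

theory Defs
  imports Complex_Main
begin

text \<open>Binary strings are lists of bits: True = 1, False = 0. Position i (1-based) is w ! (i - 1).\<close>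

fun step :: "bool list \<Rightarrow> bool list" where
  "step (False # True # rest) = True # False # step rest"
| "step (x # rest) = x # step rest"
| "step [] = []"

definition stabilized :: "bool list \<Rightarrow> bool" where
  "stabilized w \<longleftrightarrow> (\<exists>a b. w = replicate a True @ replicate b False)"

definition stab_time :: "bool list \<Rightarrow> nat" where
  "stab_time w = (LEAST k. stabilized ((step ^^ k) w))"

definition bitval :: "bool \<Rightarrow> int" where
  "bitval b = (if b then 1 else 0)"

definition S :: "bool list \<Rightarrow> nat \<Rightarrow> int" where
  "S w k = (\<Sum>i = 1..k. 1 - 2 * bitval (w ! (i - 1)))"

end

theory Submission
  imports Defs
begin

definition cF :: "bool list \<Rightarrow> nat" where "cF xs = length (filter (\<lambda>b. \<not> b) xs)"
definition cT :: "bool list \<Rightarrow> nat" where "cT xs = length (filter (\<lambda>b. b) xs)"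

definition hh :: "bool list \<Rightarrow> nat \<Rightarrow> nat" where
  "hh w k = cF (take k w) + cT (drop k w)"
definition vd :: "bool list \<Rightarrow> nat \<Rightarrow> bool" where
  "vd w k = (k \<le> length w \<and> 0 < cF (take k w) \<and> 0 < cT (drop k w))"
definition sw :: "bool list \<Rightarrow> nat \<Rightarrow> bool" where
  "sw w k = (0 < k \<and> k < length w \<and> \<not> w!(k-1) \<and> w!k)"
definition DD :: "bool list \<Rightarrow> nat" where
  "DD w = Max (insert 1 (hh w ` {k. vd w k})) - 1"

lemma step_len[simp]: "length (step w) = length w"
  by (induction w rule: step.induct) auto

lemma step_cF[simp]: "cF (step w) = cF w"
  by (induction w rule: step.induct) (auto simp: cF_def)

lemma step_cT[simp]: "cT (step w) = cT w"
  by (induction w rule: step.induct) (auto simp: cT_def)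

lemma step_app:
  "\<not> (xs \<noteq> [] \<and> ys \<noteq> [] \<and> \<not> last xs \<and> hd ys) \<Longrightarrow> step (xs @ ys) = step xs @ step ys"
proof (induction xs rule: induct_list012)
  case 1 then show ?case by simp
next
  case (2 x) then show ?case by (cases x; cases ys) (auto intro: step.simps)
next
  case (3 x y zs)
  show ?case
  proof (cases "\<not> x \<and> y")
    case True
    then have "step (zs @ ys) = step zs @ step ys" using 3 by (intro "3.IH"(1)) (cases zs; auto)
    then show ?thesis using True by auto
  next
    case False
    have "step (y # zs @ ys) = step (y # zs) @ step ys" using 3 by (intro "3.IH"(2)[simplified]) auto
    then show ?thesis using False by (cases x; cases y) auto
  qed
qed

lemma nonswap_split:
  assumes "k \<le> length w" "\<not> sw w k"
  shows "take k (step w) = step (take k w) \<and> drop k (step w) = step (drop k w)"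
proof -
  have c: "\<not> (take k w \<noteq> [] \<and> drop k w \<noteq> [] \<and> \<not> last (take k w) \<and> hd (drop k w))"
  proof
    assume a: "take k w \<noteq> [] \<and> drop k w \<noteq> [] \<and> \<not> last (take k w) \<and> hd (drop k w)"
    then have k: "0 < k" "k < length w" by auto
    have "last (take k w) = w!(k-1)" using k by (subst last_conv_nth) auto
    moreover have "hd (drop k w) = w!k" using k by (simp add: hd_drop_conv_nth)
    ultimately show False using a k assms(2) sw_def by auto
  qed
  have "step w = step (take k w) @ step (drop k w)"
    using step_app[OF c] by simp
  then show ?thesis using assms(1) by (metis append_eq_conv_conj step_len length_take min_absorb2)
qed

lemma swap_split:
  assumes "sw w k"
  shows "step w = step (take (k-1) w) @ True # False # step (drop (Suc k) w)"
proof -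
  from assms have k: "0 < k" "k < length w" "\<not> w!(k-1)" "w!k" by (auto simp: sw_def)
  have "drop (k-1) w = w!(k-1) # drop k w" using k Cons_nth_drop_Suc[of "k-1" w] by simp
  also have "drop k w = w!k # drop (Suc k) w" using k Cons_nth_drop_Suc[of k w] by simp
  finally have e: "w = take (k-1) w @ (False # True # drop (Suc k) w)"
    using k by (metis append_take_drop_id)
  have "step w = step (take (k-1) w) @ step (False # True # drop (Suc k) w)"
    by (subst e, rule step_app) simp
  then show ?thesis by simp
qed

lemma cF_take_Suc: "k < length w \<Longrightarrow> cF (take (Suc k) w) = cF (take k w) + (if w!k then 0 else 1)"
  by (simp add: take_Suc_conv_app_nth cF_def)

lemma cT_drop: "k < length w \<Longrightarrow> cT (drop k w) = cT (drop (Suc k) w) + (if w!k then 1 else 0)"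
  by (simp add: Cons_nth_drop_Suc[symmetric] cT_def)

lemma swap_hh:
  assumes "sw w k"
  shows "hh (step w) k + 2 = hh w k" "vd w k"
proof -
  from assms have k: "0 < k" "k < length w" "\<not> w!(k-1)" "w!k" by (auto simp: sw_def)
  have l: "length (step (take (k-1) w)) = k - 1" using k by simp
  have t: "take k (step w) = step (take (k-1) w) @ [True]"
    using swap_split[OF assms] l k by simp
  have d: "drop k (step w) = False # step (drop (Suc k) w)"
    using swap_split[OF assms] l k by simp
  have a: "cF (take k w) = cF (take (k-1) w) + 1"
    using cF_take_Suc[of "k-1" w] k by simp
  have b: "cT (drop k w) = cT (drop (Suc k) w) + 1"
    using cT_drop[of k w] k by simp
  show "hh (step w) k + 2 = hh w k"
    unfolding hh_def t d using a b by (simp add: cF_def cT_def step_cF[unfolded cF_def] step_cT[unfolded cT_def])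
  show "vd w k" unfolding vd_def using a b k by simp
qed

lemma vd_ge2: "vd w k \<Longrightarrow> hh w k \<ge> 2"
  by (auto simp: vd_def hh_def)

lemma vd_bounds: "vd w k \<Longrightarrow> 0 < k \<and> k < length w"
  by (auto simp: vd_def cF_def cT_def intro: ccontr)

lemma neighbor:
  assumes "vd w k" "\<not> sw w k"
  shows "\<exists>k'. vd w k' \<and> hh w k' = hh w k + 1"
proof -
  from vd_bounds[OF assms(1)] have k: "0 < k" "k < length w" by auto
  show ?thesis
  proof (cases "w!(k-1)")
    case True
    have a: "cF (take k w) = cF (take (k-1) w)" using cF_take_Suc[of "k-1" w] k True by simp
    have b: "cT (drop (k-1) w) = cT (drop k w) + 1" using cT_drop[of "k-1" w] k True by simp
    have "vd w (k-1)" "hh w (k-1) = hh w k + 1" using assms(1) a b k by (auto simp: vd_def hh_def)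
    then show ?thesis by blast
  next
    case False
    then have wk: "\<not> w!k" using assms(2) k by (auto simp: sw_def)
    have a: "cF (take (Suc k) w) = cF (take k w) + 1" using cF_take_Suc[of k w] k wk by simp
    have b: "cT (drop k w) = cT (drop (Suc k) w)" using cT_drop[of k w] k wk by simp
    have "vd w (Suc k)" "hh w (Suc k) = hh w k + 1" using assms(1) a b k by (auto simp: vd_def hh_def)
    then show ?thesis by blast
  qed
qed

lemma swap_neighbor:
  assumes "sw w k" "hh w k \<ge> 3"
  shows "\<exists>k'. vd w k' \<and> \<not> sw w k' \<and> hh w k' + 1 = hh w k"
proof -
  from assms have k: "0 < k" "k < length w" "\<not> w!(k-1)" "w!k" by (auto simp: sw_def)
  have a: "cF (take k w) = cF (take (k-1) w) + 1"
    using cF_take_Suc[of "k-1" w] k by simp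
  have b: "cT (drop k w) = cT (drop (Suc k) w) + 1"
    using cT_drop[of k w] k by simp
  have a2: "cT (drop (k-1) w) = cT (drop k w)" using cT_drop[of "k-1" w] k by simp
  have b2: "cF (take (Suc k) w) = cF (take k w)" using cF_take_Suc[of k w] k by simp
  show ?thesis
  proof (cases "cF (take (k-1) w) \<ge> 1")
    case True
    have "vd w (k-1)" "\<not> sw w (k-1)" "hh w (k-1) + 1 = hh w k"
      using True a b a2 k by (auto simp: vd_def hh_def sw_def)
    then show ?thesis by blast
  next
    case False
    then have "cT (drop (Suc k) w) \<ge> 1" using assms(2) a b by (simp add: hh_def)
    then have "vd w (Suc k)" "\<not> sw w (Suc k)" "hh w (Suc k) + 1 = hh w k"
      using a b b2 k by (auto simp: vd_def hh_def sw_def)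
    then show ?thesis by blast
  qed
qed

lemma fin_vd: "finite (hh w ` {k. vd w k})"
  by (rule finite_imageI, rule finite_subset[of _ "{..length w}"]) (auto simp: vd_def)

lemma DD_le: "vd w k \<Longrightarrow> hh w k \<le> DD w + 1"
proof -
  assume v: "vd w k"
  have "hh w k \<le> Max (insert 1 (hh w ` {k. vd w k}))"
    using fin_vd v by (intro Max_ge) auto
  then show ?thesis unfolding DD_def by simp
qed

lemma DD_ach: "DD w > 0 \<Longrightarrow> \<exists>k. vd w k \<and> hh w k = DD w + 1"
proof -
  assume p: "DD w > 0"
  have "Max (insert 1 (hh w ` {k. vd w k})) \<in> insert 1 (hh w ` {k. vd w k})"
    using fin_vd by (intro Max_in) auto
  moreover have "Max (insert 1 (hh w ` {k. vd w k})) \<noteq> 1" using p unfolding DD_def by auto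
  ultimately obtain k where "vd w k" "hh w k = Max (insert 1 (hh w ` {k. vd w k}))" by auto
  then show ?thesis using p unfolding DD_def by auto
qed

lemma DD_eqI:
  assumes "\<And>k. vd w k \<Longrightarrow> hh w k \<le> d + 1"
    and "d = 0 \<or> (\<exists>k. vd w k \<and> hh w k = d + 1)"
  shows "DD w = d"
proof -
  have le: "Max (insert 1 (hh w ` {k. vd w k})) \<le> d + 1"
    using fin_vd assms(1) by (subst Max_le_iff) auto
  have ge: "Max (insert 1 (hh w ` {k. vd w k})) \<ge> d + 1"
    using assms(2)
  proof
    assume "d = 0" then show ?thesis using fin_vd by (intro Max_ge) auto
  next
    assume "\<exists>k. vd w k \<and> hh w k = d + 1"
    then obtain k where "vd w k" "hh w k = d + 1" by blast
    then show ?thesis using fin_vd by (metis (mono_tags) Max_ge finite_insert image_eqI insertCI mem_Collect_eq)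
  qed
  show ?thesis unfolding DD_def using le ge by simp
qed

lemma stab_novd: "stabilized w \<Longrightarrow> \<not> vd w k"
proof -
  assume "stabilized w"
  then obtain a b where w: "w = replicate a True @ replicate b False" by (auto simp: stabilized_def)
  show ?thesis
  proof (cases "k \<le> a")
    case True
    then show ?thesis by (simp add: w vd_def cF_def)
  next
    case False
    then show ?thesis by (simp add: w vd_def cT_def)
  qed
qed

lemma noadj_stab: "(\<forall>i. Suc i < length w \<longrightarrow> w!i \<or> \<not> w!Suc i) \<Longrightarrow> stabilized w"
proof (induction w)
  case Nil
  then show ?case by (auto simp: stabilized_def intro: exI[of _ 0])
next
  case (Cons x xs)
  then have "stabilized xs" by fastforce
  then obtain a b where xs: "xs = replicate a True @ replicate b False" by (auto simp: stabilized_def)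
  show ?case
  proof (cases x)
    case True
    then have "x # xs = replicate (Suc a) True @ replicate b False" by (simp add: xs)
    then show ?thesis unfolding stabilized_def by blast
  next
    case False
    have "a = 0"
    proof (rule ccontr)
      assume "a \<noteq> 0"
      then have "xs ! 0 = True" "0 < length xs" by (auto simp: xs nth_append)
      then show False using Cons.prems False by force
    qed
    then have "x # xs = replicate 0 True @ replicate (Suc b) False" by (simp add: xs False)
    then show ?thesis unfolding stabilized_def by blast
  qed
qed

lemma nostab_sw: "\<not> stabilized w \<Longrightarrow> \<exists>k. sw w k"
proof -
  assume "\<not> stabilized w"
  then obtain i where "Suc i < length w" "\<not> w!i" "w!Suc i" using noadj_stab by blast
  then have "sw w (Suc i)" by (simp add: sw_def)
  then show ?thesis by blast
qed

lemma DD_pos: "\<not> stabilized w \<Longrightarrow> DD w \<ge> 1"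
proof -
  assume "\<not> stabilized w"
  then obtain k where "sw w k" using nostab_sw by blast
  then have "vd w k" using swap_hh by blast
  then show ?thesis using DD_le[of w k] vd_ge2[of w k] by simp
qed

lemma DD_zero: "stabilized w \<Longrightarrow> DD w = 0"
  by (rule DD_eqI) (auto dest: stab_novd)

lemma DD_step:
  assumes "\<not> stabilized w"
  shows "DD (step w) = DD w - 1"
proof (rule DD_eqI)
  have nomax: "hh w k \<le> DD w" if "vd w k" "\<not> sw w k" for k
    using neighbor[OF that] DD_le by fastforce
  fix k assume v: "vd (step w) k"
  then have kl: "k \<le> length w" by (simp add: vd_def)
  show "hh (step w) k \<le> DD w - 1 + 1"
  proof (cases "sw w k")
    case True
    then show ?thesis using swap_hh[OF True] DD_le[of w k] by simp
  next
    case False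
    have "vd w k" "hh (step w) k = hh w k"
      using v nonswap_split[OF kl False] by (simp_all add: vd_def hh_def)
    then show ?thesis using nomax[of k] False DD_pos[OF assms] by simp
  qed
next
  show "DD w - 1 = 0 \<or> (\<exists>k. vd (step w) k \<and> hh (step w) k = DD w - 1 + 1)"
  proof (cases "DD w \<ge> 2")
    case False then show ?thesis by simp
  next
    case True
    obtain k0 where k0: "vd w k0" "hh w k0 = DD w + 1" using DD_ach[of w] True by auto
    have "sw w k0"
    proof (rule ccontr)
      assume "\<not> sw w k0"
      then obtain k' where "vd w k'" "hh w k' = hh w k0 + 1" using neighbor k0 by blast
      then show False using DD_le[of w k'] k0 by simp
    qed
    then obtain k' where k': "vd w k'" "\<not> sw w k'" "hh w k' + 1 = hh w k0"
      using swap_neighbor[of w k0] k0 True by auto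
    have kl: "k' \<le> length w" using k' by (simp add: vd_def)
    have "vd (step w) k'" "hh (step w) k' = hh w k'"
      using k' nonswap_split[OF kl k'(2)] by (simp_all add: vd_def hh_def)
    then show ?thesis using k' k0 True by auto
  qed
qed

lemma iter_DD: "j \<le> DD w \<Longrightarrow> DD ((step ^^ j) w) = DD w - j"
proof (induction j)
  case 0 then show ?case by simp
next
  case (Suc j)
  then have "DD ((step ^^ j) w) \<ge> 1" by simp
  then have "\<not> stabilized ((step ^^ j) w)" using DD_zero by fastforce
  then show ?case using DD_step Suc by simp
qed

lemma stab_time_DD: "stab_time w = DD w"
  unfolding stab_time_def
proof (rule Least_equality)
  show "stabilized ((step ^^ DD w) w)"
    using iter_DD[of "DD w" w] DD_pos by fastforce
next
  fix y assume "stabilized ((step ^^ y) w)"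
  then show "DD w \<le> y" using iter_DD[of y w] DD_zero by (cases "y \<le> DD w") fastforce+
qed

lemma S_eq: "k \<le> length w \<Longrightarrow> S w k = int (cF (take k w)) - int (cT (take k w))"
proof (induction k)
  case 0 then show ?case by (simp add: S_def cF_def cT_def)
next
  case (Suc k)
  have "S w (Suc k) = S w k + (1 - 2 * bitval (w ! k))"
    by (simp add: S_def)
  then show ?case using Suc by (simp add: take_Suc_conv_app_nth cF_def cT_def bitval_def)
qed

lemma cT_split: "cT (drop k w) = cT w - cT (take k w)" "cT (take k w) \<le> cT w"
  by (simp_all add: cT_def) (metis append_take_drop_id filter_append length_append diff_add_inverse, metis append_take_drop_id filter_append length_append le_add1)

theorem lemma1p2:
  fixes w :: "bool list" and n :: nat
  assumes "n \<ge> 2" and "length w = n"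
    and "w ! 0 = False" and "w ! (n - 1) = True"
  shows "real (stab_time w) =
    real n / 2 + real_of_int (Max ((\<lambda>k. S w k) ` {1..n})) - real_of_int (S w n) / 2 - 1"
proof -
  have hS: "int (hh w k) = int (cT w) + S w k" if "k \<le> n" for k
    using S_eq[of k w] that assms(2) cT_split[of k w] by (simp add: hh_def)
  have vdk: "vd w k" if "1 \<le> k" "k \<le> n - 1" for k
  proof -
    have "cF (take 1 w) = 1" using assms by (cases w) (auto simp: cF_def)
    moreover have "cF (take 1 w) \<le> cF (take k w)"
      using that by (simp add: cF_def) (metis take_add le_add_diff_inverse filter_append length_append le_add1)
    moreover have "cT (drop (n-1) w) = 1" using assms cT_drop[of "n-1" w] by (simp add: cT_def)
    moreover have "cT (drop (n-1) w) \<le> cT (drop k w)"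
      using that by (simp add: cT_def) (metis add.commute le_add_diff_inverse drop_drop append_take_drop_id filter_append length_append le_add2)
    ultimately show ?thesis using that assms by (simp add: vd_def)
  qed
  define M where "M = Max ((\<lambda>k. S w k) ` {1..n})"
  have Mge: "S w k \<le> M" if "k \<in> {1..n}" for k unfolding M_def using that by (intro Max_ge) auto
  obtain k1 where k1: "k1 \<in> {1..n}" "S w k1 = M"
    unfolding M_def using assms(1) Max_in[of "(\<lambda>k. S w k) ` {1..n}"] by fastforce
  have pos: "DD w \<ge> 1" using vdk[of 1] DD_le[of w 1] vd_ge2[of w 1] assms(1) by simp
  obtain k0 where k0: "vd w k0" "hh w k0 = DD w + 1" using DD_ach[of w] pos by auto
  have k0b: "k0 \<le> n" using k0 assms by (simp add: vd_def)
  have ge: "int (DD w) + 1 \<le> int (cT w) + M"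
    using hS[OF k0b] k0 Mge[of k0] vd_bounds[OF k0(1)] assms by simp
  have tn: "take n w = take (n-1) w @ [True]" using assms take_Suc_conv_app_nth[of "n-1" w] by simp
  have Sn: "S w n = S w (n-1) - 1"
    using S_eq[of n w] S_eq[of "n-1" w] assms tn by (simp add: cT_def cF_def)
  have le: "int (cT w) + M \<le> int (DD w) + 1"
  proof (cases "k1 = n")
    case True
    have "int (hh w (n-1)) \<le> int (DD w) + 1" using DD_le[OF vdk[of "n-1"]] assms by linarith
    then show ?thesis using hS[of "n-1"] k1 True Sn by simp
  next
    case False
    have k1n: "1 \<le> k1" "k1 \<le> n - 1" using k1 False by auto
    have "hh w k1 \<le> DD w + 1" using DD_le[OF vdk[OF k1n]] .
    then have "int (hh w k1) \<le> int (DD w) + 1" by linarith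
    then show ?thesis using hS[of k1] k1 by simp
  qed
  have cn: "cT w + cF w = n" using assms(2) by (simp add: cT_def cF_def sum_length_filter_compl)
  have sn: "S w n = int (cF w) - int (cT w)" using S_eq[of n w] assms by simp
  have e: "int (stab_time w) = int (cT w) + M - 1"
    using stab_time_DD[of w] ge le by linarith
  have e2: "real (stab_time w) = real (cT w) + real_of_int M - 1"
    using arg_cong[OF e, of real_of_int] by simp
  have cn2: "real n = real (cT w) + real (cF w)" using cn by simp
  have sn2: "real_of_int (S w n) = real (cF w) - real (cT w)" using sn by simp
  show ?thesis unfolding M_def[symmetric] e2 cn2 sn2 by (simp add: field_simps)
qed

end
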